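(* Let $(\mathcal{X},\mathcal{F},\mu)$ be a probability space, let $(\mathcal{M},\mathfrak{M})$ be a measurable space, and let $f\colon \mathcal{X}\times\mathcal{X}\to\mathcal{M}$ be a measurable function. Assume $f$ is antisymmetric in the following sense: there is a measurable map $i\colon\mathcal{M}\to\mathcal{M}$ with $i(i(m))=m$ for every $m\in\mathcal{M}$ and $f(x,y)=i(f(y,x))$ for all $x,y\in\mathcal{X}$. Let $X$ and $Y$ be independent random variables with law $\mu$ and put $F=f(X,Y)$. (1) If $F$ and $Y$ are independent, then $X$ and $F$ are also independent; hence $X$, $Y$, $F$ are pairwise independent. (2) If $X$ and $F$ are independent, then $F$ and $Y$ are also independent; hence $X$, $Y$, $F$ are pairwise independent. Moreover, whenever $X,Y,F$ are pairwise independent (in particular in cases (1) and (2)), the following hold: (Hex$'$) for every balanced decomposition $(\mu_0,\mu_1)$ of $\mu$, if for $i=0,1$ the pair $(X_i,Y_i)$ consists of independent random variables each of law $\mu_i$ and $F_i=f(X_i,Y_i)$, then $F_0$ and $F_1$ have the same distribution on $\mathcal{M}$; (Hex$''$) for any two balanced decompositions $(\mu_0,\mu_1)$ and $(\nu_0,\nu_1)$ of $\mu$, if for $i=0,1$, $X_i$ has law $\mu_i$, $Y_i$ has law $\nu_i$, $X_i$ and $Y_i$ are independent, and $F_i=f(X_i,Y_i)$, then $F_0$ and $F_1$ have the same distribution on $\mathcal{M}$.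
   Context: A balanced decomposition of a probability measure $\mu$ is a pair $(\mu_0,\mu_1)$ of probability measures on the same space such that $\mu_0+\mu_1=2\mu$. Random variables $X,Y,F$ are pairwise independent if each of the pairs $(X,Y)$, $(X,F)$, $(Y,F)$ is independent. *)

theory Defs
  imports "HOL-Probability.Probability"
begin

definition balanced_decomposition :: "'a measure \<Rightarrow> 'a measure \<Rightarrow> 'a measure \<Rightarrow> bool" where
  "balanced_decomposition \<mu> \<mu>0 \<mu>1 \<longleftrightarrow>
     prob_space \<mu>0 \<and> prob_space \<mu>1 \<and> sets \<mu>0 = sets \<mu> \<and> sets \<mu>1 = sets \<mu> \<and>
     (\<forall>A\<in>sets \<mu>. emeasure \<mu>0 A + emeasure \<mu>1 A = 2 * emeasure \<mu> A)"

text \<open>Independence of two random variables A, B on the probability space P with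
  values in possibly different measurable spaces Ma, Mb (the library's indep_var
  requires both targets to have the same type).\<close>
definition indep_rv :: "'c measure \<Rightarrow> 'a measure \<Rightarrow> ('c \<Rightarrow> 'a) \<Rightarrow> 'b measure \<Rightarrow> ('c \<Rightarrow> 'b) \<Rightarrow> bool" where
  "indep_rv P Ma A Mb B \<longleftrightarrow>
     A \<in> measurable P Ma \<and> B \<in> measurable P Mb \<and>
     (\<forall>a\<in>sets Ma. \<forall>b\<in>sets Mb.
        measure P (A -` a \<inter> B -` b \<inter> space P) = measure P (A -` a \<inter> space P) * measure P (B -` b \<inter> space P))"

end

theory Submission
  imports Defs
begin


lemma balanced_nn_integral:
  assumes bd: "balanced_decomposition \<mu> \<mu>0 \<mu>1" and h: "h \<in> borel_measurable \<mu>"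
  shows "(\<integral>\<^sup>+x. h x \<partial>\<mu>0) + (\<integral>\<^sup>+x. h x \<partial>\<mu>1) = 2 * (\<integral>\<^sup>+x. h x \<partial>\<mu>)"
proof -
  have s0: "sets \<mu>0 = sets \<mu>" and s1: "sets \<mu>1 = sets \<mu>"
    and em: "\<And>A. A \<in> sets \<mu> \<Longrightarrow> emeasure \<mu>0 A + emeasure \<mu>1 A = 2 * emeasure \<mu> A"
    using bd by (auto simp: balanced_decomposition_def)
  have sp0: "space \<mu>0 = space \<mu>" and sp1: "space \<mu>1 = space \<mu>"
    using sets_eq_imp_space_eq[OF s0] sets_eq_imp_space_eq[OF s1] by auto
  have m0: "\<And>g. g \<in> borel_measurable \<mu> \<Longrightarrow> g \<in> borel_measurable \<mu>0"
    using measurable_cong_sets[OF s0 refl] by blast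
  have m1: "\<And>g. g \<in> borel_measurable \<mu> \<Longrightarrow> g \<in> borel_measurable \<mu>1"
    using measurable_cong_sets[OF s1 refl] by blast
  show ?thesis
  using h proof (induct rule: borel_measurable_induct)
    case (cong f g)
    have "(\<integral>\<^sup>+x. f x \<partial>\<mu>0) = (\<integral>\<^sup>+x. g x \<partial>\<mu>0)" "(\<integral>\<^sup>+x. f x \<partial>\<mu>1) = (\<integral>\<^sup>+x. g x \<partial>\<mu>1)"
       "(\<integral>\<^sup>+x. f x \<partial>\<mu>) = (\<integral>\<^sup>+x. g x \<partial>\<mu>)"
      using cong(3) sp0 sp1 by (auto intro!: nn_integral_cong)
    then show ?case using cong(4) by simp
  next
    case (set A)
    then show ?case using em[OF set] s0 s1 by simp
  next
    case (mult u c)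
    have "(\<integral>\<^sup>+x. c * u x \<partial>\<mu>0) + (\<integral>\<^sup>+x. c * u x \<partial>\<mu>1)
        = c * ((\<integral>\<^sup>+x. u x \<partial>\<mu>0) + (\<integral>\<^sup>+x. u x \<partial>\<mu>1))"
      using mult(1,2) by (simp add: nn_integral_cmult m0 m1 distrib_left)
    also have "\<dots> = c * (2 * (\<integral>\<^sup>+x. u x \<partial>\<mu>))"
      using mult(4) by (rule arg_cong)
    also have "\<dots> = 2 * (\<integral>\<^sup>+x. c * u x \<partial>\<mu>)"
      using mult by (simp add: nn_integral_cmult mult.left_commute del: distrib_left_numeral)
    finally show ?case .
  next
    case (add u v)
    have "(\<integral>\<^sup>+x. v x + u x \<partial>\<mu>0) + (\<integral>\<^sup>+x. v x + u x \<partial>\<mu>1)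
        = ((\<integral>\<^sup>+x. v x \<partial>\<mu>0) + (\<integral>\<^sup>+x. v x \<partial>\<mu>1)) + ((\<integral>\<^sup>+x. u x \<partial>\<mu>0) + (\<integral>\<^sup>+x. u x \<partial>\<mu>1))"
      using add by (simp add: nn_integral_add m0 m1 algebra_simps)
    also have "\<dots> = 2 * (\<integral>\<^sup>+x. v x + u x \<partial>\<mu>)"
      using add by (simp add: nn_integral_add distrib_left)
    finally show ?case .
  next
    case (seq U)
    have sa: "(SUP i. U i) = (\<lambda>x. SUP i. U i x)" by (rule ext) (simp add: image_image)
    have inc: "\<And>M. incseq (\<lambda>i. integral\<^sup>N M (U i))"
      using seq(4) by (auto simp: incseq_def le_fun_def intro!: nn_integral_mono)
    have "(\<integral>\<^sup>+x. (SUP i. U i) x \<partial>\<mu>0) + (\<integral>\<^sup>+x. (SUP i. U i) x \<partial>\<mu>1)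
        = (SUP i. integral\<^sup>N \<mu>0 (U i)) + (SUP i. integral\<^sup>N \<mu>1 (U i))"
      unfolding sa using seq by (simp add: nn_integral_monotone_convergence_SUP m0 m1)
    also have "\<dots> = (SUP i. integral\<^sup>N \<mu>0 (U i) + integral\<^sup>N \<mu>1 (U i))"
      using ennreal_SUP_add[OF inc inc] by simp
    also have "\<dots> = (SUP i. 2 * integral\<^sup>N \<mu> (U i))"
      using seq(3) by simp
    also have "\<dots> = 2 * (SUP i. integral\<^sup>N \<mu> (U i))"
      by (simp add: SUP_mult_left_ennreal)
    also have "\<dots> = 2 * (\<integral>\<^sup>+x. (SUP i. U i) x \<partial>\<mu>)"
      unfolding sa using seq by (simp add: nn_integral_monotone_convergence_SUP)
    finally show ?case .
  qed
qed




lemma joint_distr: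
  assumes P: "prob_space P" and Xl: "distr P \<mu> X = \<rho>" and Yl: "distr P \<mu> Y = \<sigma>"
    and ind: "indep_rv P \<mu> X \<mu> Y"
  shows "distr P (\<mu> \<Otimes>\<^sub>M \<mu>) (\<lambda>\<omega>. (X \<omega>, Y \<omega>)) = \<rho> \<Otimes>\<^sub>M \<sigma>"
proof -
  interpret prob_space P by fact
  have Xm: "X \<in> measurable P \<mu>" and Ym: "Y \<in> measurable P \<mu>"
    and ii: "\<And>a b. a \<in> sets \<mu> \<Longrightarrow> b \<in> sets \<mu> \<Longrightarrow>
        measure P (X -` a \<inter> Y -` b \<inter> space P) = measure P (X -` a \<inter> space P) * measure P (Y -` b \<inter> space P)"
    using ind by (auto simp: indep_rv_def)
  have pr: "prob_space \<rho>" "prob_space \<sigma>"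
    using prob_space_distr[OF Xm] prob_space_distr[OF Ym] Xl Yl by auto
  have sr: "sets \<rho> = sets \<mu>" "sets \<sigma> = sets \<mu>" using Xl Yl by auto
  show ?thesis
  proof (rule pair_measure_eqI[symmetric])
    show "sigma_finite_measure \<rho>" "sigma_finite_measure \<sigma>"
      using pr by (auto intro: prob_space_imp_sigma_finite)
    show "sets (\<rho> \<Otimes>\<^sub>M \<sigma>) = sets (distr P (\<mu> \<Otimes>\<^sub>M \<mu>) (\<lambda>\<omega>. (X \<omega>, Y \<omega>)))"
      using sr by (simp cong: sets_pair_measure_cong)
    fix A B assume A: "A \<in> sets \<rho>" and B: "B \<in> sets \<sigma>"
    have A': "A \<in> sets \<mu>" and B': "B \<in> sets \<mu>" using A B sr by auto
    have "emeasure \<rho> A = emeasure P (X -` A \<inter> space P)"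
      unfolding Xl[symmetric] using A' Xm by (simp add: emeasure_distr)
    moreover have "emeasure \<sigma> B = emeasure P (Y -` B \<inter> space P)"
      unfolding Yl[symmetric] using B' Ym by (simp add: emeasure_distr)
    moreover have "emeasure (distr P (\<mu> \<Otimes>\<^sub>M \<mu>) (\<lambda>\<omega>. (X \<omega>, Y \<omega>))) (A \<times> B)
        = emeasure P (X -` A \<inter> Y -` B \<inter> space P)"
      using A' B' Xm Ym by (subst emeasure_distr) (auto intro!: arg_cong[where f="emeasure P"])
    ultimately show "emeasure \<rho> A * emeasure \<sigma> B = emeasure (distr P (\<mu> \<Otimes>\<^sub>M \<mu>) (\<lambda>\<omega>. (X \<omega>, Y \<omega>))) (A \<times> B)"
      using ii[OF A' B'] by (simp add: emeasure_eq_measure ennreal_mult)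
  qed
qed




lemma balanced_AE:
  assumes bd: "balanced_decomposition \<mu> \<mu>0 \<mu>1" and ae: "AE x in \<mu>. Q x"
  shows "AE x in \<mu>0. Q x"
proof -
  have s0: "sets \<mu>0 = sets \<mu>" and em: "\<And>A. A \<in> sets \<mu> \<Longrightarrow> emeasure \<mu>0 A + emeasure \<mu>1 A = 2 * emeasure \<mu> A"
    using bd by (auto simp: balanced_decomposition_def)
  have sp0: "space \<mu>0 = space \<mu>" using sets_eq_imp_space_eq[OF s0] .
  from ae obtain N where N: "{x \<in> space \<mu>. \<not> Q x} \<subseteq> N" "emeasure \<mu> N = 0" "N \<in> sets \<mu>"
    by (auto elim!: AE_E)
  have "emeasure \<mu>0 N = 0" using em[OF N(3)] N(2) by simp
  then show ?thesis using N s0 sp0 by (intro AE_I[of _ _ N]) auto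
qed

lemma balanced_parts:
  assumes bd: "balanced_decomposition \<mu> \<mu>0 \<mu>1"
  shows "prob_space \<mu>0" "prob_space \<mu>1" "sets \<mu>0 = sets \<mu>" "sets \<mu>1 = sets \<mu>"
  using bd by (auto simp: balanced_decomposition_def)

lemma hex_core:
  assumes mu: "prob_space \<mu>" and A: "A \<in> sets (\<mu> \<Otimes>\<^sub>M \<mu>)"
    and h_ae: "AE x in \<mu>. (\<integral>\<^sup>+y. indicator A (x, y) \<partial>\<mu>) = c"
    and k_ae: "AE y in \<mu>. (\<integral>\<^sup>+x. indicator A (x, y) \<partial>\<mu>) = c"
    and c_fin: "c \<noteq> \<infinity>"
    and bd1: "balanced_decomposition \<mu> \<mu>0 \<mu>1" and bd2: "balanced_decomposition \<mu> \<nu>0 \<nu>1"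
  shows "emeasure (\<mu>0 \<Otimes>\<^sub>M \<nu>0) A = emeasure (\<mu>1 \<Otimes>\<^sub>M \<nu>1) A"
proof -
  define G where "G \<rho> \<sigma> = (\<integral>\<^sup>+x. \<integral>\<^sup>+y. indicator A (x, y) \<partial>\<sigma> \<partial>\<rho>)" for \<rho> \<sigma> :: "'a measure"
  note p1 = balanced_parts[OF bd1] and p2 = balanced_parts[OF bd2]
  have gm: "(\<lambda>p. indicator A p :: ennreal) \<in> borel_measurable (\<mu> \<Otimes>\<^sub>M \<mu>)" using A by simp
  have EG: "emeasure (\<rho> \<Otimes>\<^sub>M \<sigma>) A = G \<rho> \<sigma>" if "sets \<rho> = sets \<mu>" "sets \<sigma> = sets \<mu>" "prob_space \<sigma>" for \<rho> \<sigma>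
  proof -
    interpret sigma: prob_space \<sigma> by fact
    have "A \<in> sets (\<rho> \<Otimes>\<^sub>M \<sigma>)" using A that by (simp cong: sets_pair_measure_cong)
    then show ?thesis unfolding G_def by (rule sigma.emeasure_pair_measure)
  qed
  have meas_in: "(\<lambda>x. \<integral>\<^sup>+y. indicator A (x, y) \<partial>\<sigma>) \<in> borel_measurable \<mu>"
    if "prob_space \<sigma>" "sets \<sigma> = sets \<mu>" for \<sigma>
  proof -
    interpret sigma: prob_space \<sigma> by fact
    have "(\<lambda>p. indicator A p :: ennreal) \<in> borel_measurable (\<mu> \<Otimes>\<^sub>M \<sigma>)"
      using gm measurable_cong_sets[OF sets_pair_measure_cong[OF refl that(2)] refl] by blast
    then show ?thesis by (rule sigma.borel_measurable_nn_integral_fst)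
  qed
  have meas_sec: "(\<lambda>y. indicator A (x, y) :: ennreal) \<in> borel_measurable \<mu>" if "x \<in> space \<mu>" for x
    using measurable_Pair2[OF gm that] .
  have meas_sec': "(\<lambda>x. indicator A (x, y) :: ennreal) \<in> borel_measurable \<mu>" if "y \<in> space \<mu>" for y
    using measurable_Pair1[OF gm that] .
  have lin2: "G \<rho> \<nu>0 + G \<rho> \<nu>1 = 2 * c"
    if rho: "prob_space \<rho>" "sets \<rho> = sets \<mu>" and aeT: "\<And>Q. (AE x in \<mu>. Q x) \<Longrightarrow> AE x in \<rho>. Q x" for \<rho>
  proof -
    interpret rho: prob_space \<rho> by fact
    have sp: "space \<rho> = space \<mu>" using sets_eq_imp_space_eq[OF rho(2)] .
    have mr: "\<And>g. g \<in> borel_measurable \<mu> \<Longrightarrow> g \<in> borel_measurable \<rho>"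
      using measurable_cong_sets[OF rho(2) refl] by blast
    have "G \<rho> \<nu>0 + G \<rho> \<nu>1 = (\<integral>\<^sup>+x. (\<integral>\<^sup>+y. indicator A (x, y) \<partial>\<nu>0) + (\<integral>\<^sup>+y. indicator A (x, y) \<partial>\<nu>1) \<partial>\<rho>)"
      unfolding G_def using p2 by (intro nn_integral_add[symmetric] mr meas_in) auto
    also have "\<dots> = (\<integral>\<^sup>+x. 2 * (\<integral>\<^sup>+y. indicator A (x, y) \<partial>\<mu>) \<partial>\<rho>)"
      using sp by (intro nn_integral_cong balanced_nn_integral[OF bd2] meas_sec) auto
    also have "\<dots> = (\<integral>\<^sup>+x. 2 * c \<partial>\<rho>)"
      using aeT[OF h_ae] by (intro nn_integral_cong_AE) auto
    also have "\<dots> = 2 * c" using rho.emeasure_space_1 by simp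
    finally show ?thesis .
  qed
  have a1: "G \<mu>0 \<nu>0 + G \<mu>0 \<nu>1 = 2 * c"
    using p1 by (intro lin2 balanced_AE[OF bd1]) auto
  have a2: "G \<mu>1 \<nu>0 + G \<mu>1 \<nu>1 = 2 * c"
  proof -
    have bd1': "balanced_decomposition \<mu> \<mu>1 \<mu>0"
      using bd1 by (auto simp: balanced_decomposition_def add.commute)
    show ?thesis using p1 by (intro lin2 balanced_AE[OF bd1']) auto
  qed
  have a3: "G \<mu>0 \<nu>0 + G \<mu>1 \<nu>0 = 2 * c"
  proof -
    interpret nu: prob_space \<nu>0 using p2 by auto
    interpret mu: prob_space \<mu> by fact
    interpret pair_sigma_finite \<mu> \<nu>0 by unfold_locales
    have sp: "space \<nu>0 = space \<mu>" using sets_eq_imp_space_eq[OF p2(3)] .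
    have gm': "(\<lambda>p. indicator A p :: ennreal) \<in> borel_measurable (\<mu> \<Otimes>\<^sub>M \<nu>0)"
      using gm measurable_cong_sets[OF sets_pair_measure_cong[OF refl p2(3)] refl] by blast
    have "G \<mu>0 \<nu>0 + G \<mu>1 \<nu>0 = 2 * G \<mu> \<nu>0"
      unfolding G_def using p2 by (intro balanced_nn_integral[OF bd1] meas_in) auto
    also have "G \<mu> \<nu>0 = (\<integral>\<^sup>+y. \<integral>\<^sup>+x. indicator A (x, y) \<partial>\<mu> \<partial>\<nu>0)"
      unfolding G_def using Fubini[OF gm'] by simp
    also have "\<dots> = (\<integral>\<^sup>+y. c \<partial>\<nu>0)"
      using balanced_AE[OF bd2 k_ae] by (intro nn_integral_cong_AE) auto
    also have "\<dots> = c" using nu.emeasure_space_1 by simp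
    finally show ?thesis .
  qed
  have fin: "G \<mu>0 \<nu>0 \<noteq> \<infinity>" "G \<mu>1 \<nu>0 \<noteq> \<infinity>"
  proof -
    have tc: "2 * c \<noteq> \<top>" using c_fin by (simp add: ennreal_mult_eq_top_iff)
    show "G \<mu>0 \<nu>0 \<noteq> \<infinity>" using a1 tc by (metis ennreal_add_eq_top infinity_ennreal_def)
    show "G \<mu>1 \<nu>0 \<noteq> \<infinity>" using a2 tc by (metis ennreal_add_eq_top infinity_ennreal_def)
  qed
  have "G \<mu>0 \<nu>1 = G \<mu>1 \<nu>0"
    using a1 a3 fin(1) ennreal_add_left_cancel by metis
  then have "G \<mu>0 \<nu>0 = G \<mu>1 \<nu>1"
    using a1 a2 fin(2) ennreal_add_left_cancel add.commute by metis
  then show ?thesis using EG p1 p2 by simp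
qed




lemma ae_X:
  assumes mu: "prob_space \<mu>" and A: "A \<in> sets (\<mu> \<Otimes>\<^sub>M \<mu>)"
    and H: "\<forall>C\<in>sets \<mu>. measure (\<mu> \<Otimes>\<^sub>M \<mu>) ((C \<times> space \<mu>) \<inter> A) = measure \<mu> C * measure (\<mu> \<Otimes>\<^sub>M \<mu>) A"
  shows "AE x in \<mu>. (\<integral>\<^sup>+y. indicator A (x, y) \<partial>\<mu>) = emeasure (\<mu> \<Otimes>\<^sub>M \<mu>) A"
proof -
  interpret pair_prob_space \<mu> \<mu> using mu by (simp add: pair_prob_space_def pair_sigma_finite_def prob_space_imp_sigma_finite)
  have gm: "(\<lambda>p. indicator A p :: ennreal) \<in> borel_measurable (\<mu> \<Otimes>\<^sub>M \<mu>)" using A by simp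
  show ?thesis
  proof (rule M1.density_unique2)
    show "(\<lambda>x. \<integral>\<^sup>+y. indicator A (x, y) \<partial>\<mu>) \<in> borel_measurable \<mu>"
      by (rule M1.borel_measurable_nn_integral_fst[OF gm])
    show "(\<lambda>x. emeasure (\<mu> \<Otimes>\<^sub>M \<mu>) A) \<in> borel_measurable \<mu>" by simp
    fix C assume C: "C \<in> sets \<mu>"
    have CA: "(C \<times> space \<mu>) \<inter> A \<in> sets (\<mu> \<Otimes>\<^sub>M \<mu>)" using C A by auto
    have "(\<integral>\<^sup>+x. (\<integral>\<^sup>+y. indicator A (x, y) \<partial>\<mu>) * indicator C x \<partial>\<mu>)
        = (\<integral>\<^sup>+x. \<integral>\<^sup>+y. indicator ((C \<times> space \<mu>) \<inter> A) (x, y) \<partial>\<mu> \<partial>\<mu>)"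
    proof (rule nn_integral_cong)
      fix x assume x: "x \<in> space \<mu>"
      have "(\<integral>\<^sup>+y. indicator A (x, y) \<partial>\<mu>) * indicator C x = (\<integral>\<^sup>+y. indicator A (x, y) * indicator C x \<partial>\<mu>)"
        using measurable_Pair2[OF gm x] by (rule nn_integral_multc[symmetric])
      also have "\<dots> = (\<integral>\<^sup>+y. indicator ((C \<times> space \<mu>) \<inter> A) (x, y) \<partial>\<mu>)"
        by (rule nn_integral_cong) (auto simp: indicator_def)
      finally show "(\<integral>\<^sup>+y. indicator A (x, y) \<partial>\<mu>) * indicator C x = (\<integral>\<^sup>+y. indicator ((C \<times> space \<mu>) \<inter> A) (x, y) \<partial>\<mu>)" .
    qed
    also have "\<dots> = emeasure (\<mu> \<Otimes>\<^sub>M \<mu>) ((C \<times> space \<mu>) \<inter> A)"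
      by (rule M1.emeasure_pair_measure[symmetric, OF CA])
    also have "\<dots> = ennreal (measure \<mu> C * measure (\<mu> \<Otimes>\<^sub>M \<mu>) A)"
      using H C by (simp add: P.emeasure_eq_measure)
    also have "\<dots> = emeasure (\<mu> \<Otimes>\<^sub>M \<mu>) A * emeasure \<mu> C"
      by (simp add: P.emeasure_eq_measure M1.emeasure_eq_measure ennreal_mult mult.commute)
    also have "\<dots> = (\<integral>\<^sup>+x. emeasure (\<mu> \<Otimes>\<^sub>M \<mu>) A * indicator C x \<partial>\<mu>)"
      using C by (simp only: nn_integral_cmult_indicator)
    finally show "(\<integral>\<^sup>+x\<in>C. (\<integral>\<^sup>+y. indicator A (x, y) \<partial>\<mu>) \<partial>\<mu>) = (\<integral>\<^sup>+x\<in>C. emeasure (\<mu> \<Otimes>\<^sub>M \<mu>) A \<partial>\<mu>)" .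
  qed
qed

lemma ae_Y:
  assumes mu: "prob_space \<mu>" and A: "A \<in> sets (\<mu> \<Otimes>\<^sub>M \<mu>)"
    and H: "\<forall>D\<in>sets \<mu>. measure (\<mu> \<Otimes>\<^sub>M \<mu>) (A \<inter> (space \<mu> \<times> D)) = measure (\<mu> \<Otimes>\<^sub>M \<mu>) A * measure \<mu> D"
  shows "AE y in \<mu>. (\<integral>\<^sup>+x. indicator A (x, y) \<partial>\<mu>) = emeasure (\<mu> \<Otimes>\<^sub>M \<mu>) A"
proof -
  interpret pair_prob_space \<mu> \<mu> using mu by (simp add: pair_prob_space_def pair_sigma_finite_def prob_space_imp_sigma_finite)
  have gm: "(\<lambda>p. indicator A p :: ennreal) \<in> borel_measurable (\<mu> \<Otimes>\<^sub>M \<mu>)" using A by simp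
  show ?thesis
  proof (rule M1.density_unique2)
    show "(\<lambda>y. \<integral>\<^sup>+x. indicator A (x, y) \<partial>\<mu>) \<in> borel_measurable \<mu>"
    proof -
      have gs: "(\<lambda>p. indicator A (snd p, fst p) :: ennreal) \<in> borel_measurable (\<mu> \<Otimes>\<^sub>M \<mu>)"
        using A by measurable
      show ?thesis using M1.borel_measurable_nn_integral_fst[OF gs] by simp
    qed
    show "(\<lambda>x. emeasure (\<mu> \<Otimes>\<^sub>M \<mu>) A) \<in> borel_measurable \<mu>" by simp
    fix D assume D: "D \<in> sets \<mu>"
    have DA: "A \<inter> (space \<mu> \<times> D) \<in> sets (\<mu> \<Otimes>\<^sub>M \<mu>)" using D A by auto
    have gm2: "(\<lambda>p. indicator (A \<inter> (space \<mu> \<times> D)) p :: ennreal) \<in> borel_measurable (\<mu> \<Otimes>\<^sub>M \<mu>)" using DA by simp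
    have "(\<integral>\<^sup>+y. (\<integral>\<^sup>+x. indicator A (x, y) \<partial>\<mu>) * indicator D y \<partial>\<mu>)
        = (\<integral>\<^sup>+y. \<integral>\<^sup>+x. indicator (A \<inter> (space \<mu> \<times> D)) (x, y) \<partial>\<mu> \<partial>\<mu>)"
    proof (rule nn_integral_cong)
      fix y assume y: "y \<in> space \<mu>"
      have "(\<integral>\<^sup>+x. indicator A (x, y) \<partial>\<mu>) * indicator D y = (\<integral>\<^sup>+x. indicator A (x, y) * indicator D y \<partial>\<mu>)"
        using measurable_Pair1[OF gm y] by (rule nn_integral_multc[symmetric])
      also have "\<dots> = (\<integral>\<^sup>+x. indicator (A \<inter> (space \<mu> \<times> D)) (x, y) \<partial>\<mu>)"
        using y by (intro nn_integral_cong) (auto simp: indicator_def)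
      finally show "(\<integral>\<^sup>+x. indicator A (x, y) \<partial>\<mu>) * indicator D y = (\<integral>\<^sup>+x. indicator (A \<inter> (space \<mu> \<times> D)) (x, y) \<partial>\<mu>)" .
    qed
    also have "\<dots> = (\<integral>\<^sup>+x. \<integral>\<^sup>+y. indicator (A \<inter> (space \<mu> \<times> D)) (x, y) \<partial>\<mu> \<partial>\<mu>)"
      by (rule Fubini[OF gm2])
    also have "\<dots> = emeasure (\<mu> \<Otimes>\<^sub>M \<mu>) (A \<inter> (space \<mu> \<times> D))"
      by (rule M1.emeasure_pair_measure[symmetric, OF DA])
    also have "\<dots> = ennreal (measure (\<mu> \<Otimes>\<^sub>M \<mu>) A * measure \<mu> D)"
      using H D by (simp add: P.emeasure_eq_measure)
    also have "\<dots> = (\<integral>\<^sup>+x. emeasure (\<mu> \<Otimes>\<^sub>M \<mu>) A * indicator D x \<partial>\<mu>)"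
      using D by (simp add: nn_integral_cmult_indicator P.emeasure_eq_measure M1.emeasure_eq_measure ennreal_mult)
    finally show "(\<integral>\<^sup>+y\<in>D. (\<integral>\<^sup>+x. indicator A (x, y) \<partial>\<mu>) \<partial>\<mu>) = (\<integral>\<^sup>+x\<in>D. emeasure (\<mu> \<Otimes>\<^sub>M \<mu>) A \<partial>\<mu>)" .
  qed
qed




theorem corollary4p1:
  fixes \<mu> :: "'a measure" and M :: "'b measure" and f :: "'a \<times> 'a \<Rightarrow> 'b"
    and i :: "'b \<Rightarrow> 'b" and P :: "'c measure" and X Y :: "'c \<Rightarrow> 'a"
  assumes mu: "prob_space \<mu>"
    and f_meas: "f \<in> measurable (\<mu> \<Otimes>\<^sub>M \<mu>) M"
    and i_meas: "i \<in> measurable M M"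
    and i_inv: "\<And>m. m \<in> space M \<Longrightarrow> i (i m) = m"
    and antisym: "\<And>x y. x \<in> space \<mu> \<Longrightarrow> y \<in> space \<mu> \<Longrightarrow> f (x, y) = i (f (y, x))"
    and P: "prob_space P"
    and X_law: "distr P \<mu> X = \<mu>" and Y_law: "distr P \<mu> Y = \<mu>"
    and XY: "indep_rv P \<mu> X \<mu> Y"
  defines "F \<equiv> (\<lambda>\<omega>. f (X \<omega>, Y \<omega>))"
  shows
    "(indep_rv P M F \<mu> Y \<longrightarrow>
        indep_rv P \<mu> X M F \<and>
        (indep_rv P \<mu> X \<mu> Y \<and> indep_rv P \<mu> X M F \<and> indep_rv P M F \<mu> Y))
   \<and> (indep_rv P \<mu> X M F \<longrightarrow>
        indep_rv P M F \<mu> Y \<and>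
        (indep_rv P \<mu> X \<mu> Y \<and> indep_rv P \<mu> X M F \<and> indep_rv P M F \<mu> Y))
   \<and> ((indep_rv P \<mu> X \<mu> Y \<and> indep_rv P \<mu> X M F \<and> indep_rv P M F \<mu> Y) \<longrightarrow>
        (\<forall>\<mu>0 \<mu>1. balanced_decomposition \<mu> \<mu>0 \<mu>1 \<longrightarrow>
           (\<forall>(P0 :: 'd measure) X0 Y0 (P1 :: 'e measure) X1 Y1.
              prob_space P0 \<and> distr P0 \<mu> X0 = \<mu>0 \<and> distr P0 \<mu> Y0 = \<mu>0 \<and>
              indep_rv P0 \<mu> X0 \<mu> Y0 \<and>
              prob_space P1 \<and> distr P1 \<mu> X1 = \<mu>1 \<and> distr P1 \<mu> Y1 = \<mu>1 \<and>
              indep_rv P1 \<mu> X1 \<mu> Y1 \<longrightarrow>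
              distr P0 M (\<lambda>\<omega>. f (X0 \<omega>, Y0 \<omega>)) = distr P1 M (\<lambda>\<omega>. f (X1 \<omega>, Y1 \<omega>))))
      \<and> (\<forall>\<mu>0 \<mu>1 \<nu>0 \<nu>1. balanced_decomposition \<mu> \<mu>0 \<mu>1 \<longrightarrow> balanced_decomposition \<mu> \<nu>0 \<nu>1 \<longrightarrow>
           (\<forall>(P0 :: 'f measure) X0 Y0 (P1 :: 'g measure) X1 Y1.
              prob_space P0 \<and> distr P0 \<mu> X0 = \<mu>0 \<and> distr P0 \<mu> Y0 = \<nu>0 \<and>
              indep_rv P0 \<mu> X0 \<mu> Y0 \<and>
              prob_space P1 \<and> distr P1 \<mu> X1 = \<mu>1 \<and> distr P1 \<mu> Y1 = \<nu>1 \<and>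
              indep_rv P1 \<mu> X1 \<mu> Y1 \<longrightarrow>
              distr P0 M (\<lambda>\<omega>. f (X0 \<omega>, Y0 \<omega>)) = distr P1 M (\<lambda>\<omega>. f (X1 \<omega>, Y1 \<omega>)))))"
proof -
  let ?Q = "\<mu> \<Otimes>\<^sub>M \<mu>"
  let ?S = "space \<mu>"
  define AB where "AB B = f -` B \<inter> space ?Q" for B
  interpret mu: prob_space \<mu> by fact
  interpret PP: prob_space P by fact
  interpret pair_prob_space \<mu> \<mu> using mu by (simp add: pair_prob_space_def pair_sigma_finite_def prob_space_imp_sigma_finite)
  have spQ: "space ?Q = ?S \<times> ?S" by (simp add: space_pair_measure)
  have Xm: "X \<in> measurable P \<mu>" and Ym: "Y \<in> measurable P \<mu>" using XY by (auto simp: indep_rv_def)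
  have XYm: "(\<lambda>\<omega>. (X \<omega>, Y \<omega>)) \<in> measurable P ?Q" using Xm Ym by (auto intro: measurable_Pair)
  have Fm: "F \<in> measurable P M" unfolding F_def using measurable_comp[OF XYm f_meas] by (simp add: comp_def)
  have J: "distr P ?Q (\<lambda>\<omega>. (X \<omega>, Y \<omega>)) = ?Q" by (rule joint_distr[OF P X_law Y_law XY])
  have ABs: "AB B \<in> sets ?Q" if "B \<in> sets M" for B
    unfolding AB_def using measurable_sets[OF f_meas that] .
  have mJ: "measure P ((\<lambda>\<omega>. (X \<omega>, Y \<omega>)) -` E \<inter> space P) = measure ?Q E" if "E \<in> sets ?Q" for E
    using measure_distr[OF XYm that] J by simp
  have mX: "measure P (X -` C \<inter> space P) = measure \<mu> C" if "C \<in> sets \<mu>" for C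
    using measure_distr[OF Xm that] X_law by simp
  have mY: "measure P (Y -` C \<inter> space P) = measure \<mu> C" if "C \<in> sets \<mu>" for C
    using measure_distr[OF Ym that] Y_law by simp
  have XYsp: "X \<omega> \<in> ?S" "Y \<omega> \<in> ?S" if "\<omega> \<in> space P" for \<omega>
    using that measurable_space[OF Xm] measurable_space[OF Ym] by auto
  have mF: "measure P (F -` B \<inter> space P) = measure ?Q (AB B)" if "B \<in> sets M" for B
  proof -
    have "F -` B \<inter> space P = (\<lambda>\<omega>. (X \<omega>, Y \<omega>)) -` AB B \<inter> space P"
      using XYsp by (auto simp: F_def AB_def spQ)
    then show ?thesis using mJ[OF ABs[OF that]] by simp
  qed
  have mXF: "measure P (X -` C \<inter> F -` B \<inter> space P) = measure ?Q ((C \<times> ?S) \<inter> AB B)"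
    if "C \<in> sets \<mu>" "B \<in> sets M" for C B
  proof -
    have "X -` C \<inter> F -` B \<inter> space P = (\<lambda>\<omega>. (X \<omega>, Y \<omega>)) -` ((C \<times> ?S) \<inter> AB B) \<inter> space P"
      using XYsp by (auto simp: F_def AB_def spQ)
    moreover have "(C \<times> ?S) \<inter> AB B \<in> sets ?Q" using ABs[OF that(2)] that(1) by auto
    ultimately show ?thesis using mJ by (simp del: vimage_Int)
  qed
  have mFY: "measure P (F -` B \<inter> Y -` D \<inter> space P) = measure ?Q (AB B \<inter> (?S \<times> D))"
    if "B \<in> sets M" "D \<in> sets \<mu>" for B D
  proof -
    have "F -` B \<inter> Y -` D \<inter> space P = (\<lambda>\<omega>. (X \<omega>, Y \<omega>)) -` (AB B \<inter> (?S \<times> D)) \<inter> space P"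
      using XYsp by (auto simp: F_def AB_def spQ)
    moreover have "AB B \<inter> (?S \<times> D) \<in> sets ?Q" using ABs[OF that(1)] that(2) by auto
    ultimately show ?thesis using mJ by (simp del: vimage_Int)
  qed
  define XFall where "XFall \<longleftrightarrow> (\<forall>C\<in>sets \<mu>. \<forall>B\<in>sets M. measure ?Q ((C \<times> ?S) \<inter> AB B) = measure \<mu> C * measure ?Q (AB B))"
  define FYall where "FYall \<longleftrightarrow> (\<forall>B\<in>sets M. \<forall>D\<in>sets \<mu>. measure ?Q (AB B \<inter> (?S \<times> D)) = measure ?Q (AB B) * measure \<mu> D)"
  have tXF: "indep_rv P \<mu> X M F \<longleftrightarrow> XFall"
    unfolding indep_rv_def XFall_def using Xm Fm mXF mX mF by auto
  have tFY: "indep_rv P M F \<mu> Y \<longleftrightarrow> FYall"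
    unfolding indep_rv_def FYall_def using Ym Fm mFY mY mF by auto
  have swap: "measure ?Q (AB B \<inter> (?S \<times> D)) = measure ?Q ((D \<times> ?S) \<inter> AB (i -` B \<inter> space M))"
    if "B \<in> sets M" "D \<in> sets \<mu>" for B D
  proof -
    have E: "AB B \<inter> (?S \<times> D) \<in> sets ?Q" using ABs[OF that(1)] that(2) by auto
    have "measure ?Q (AB B \<inter> (?S \<times> D)) = measure (distr ?Q ?Q (\<lambda>(x, y). (y, x))) (AB B \<inter> (?S \<times> D))"
      using distr_pair_swap by simp
    also have "\<dots> = measure ?Q ((\<lambda>(x, y). (y, x)) -` (AB B \<inter> (?S \<times> D)) \<inter> space ?Q)"
      by (rule measure_distr[OF measurable_pair_swap' E])
    also have "(\<lambda>(x, y). (y, x)) -` (AB B \<inter> (?S \<times> D)) \<inter> space ?Q = (D \<times> ?S) \<inter> AB (i -` B \<inter> space M)"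
    proof -
      have fsp: "f (x, y) \<in> space M" if "x \<in> ?S" "y \<in> ?S" for x y
        using measurable_space[OF f_meas] that by (auto simp: spQ)
      have key: "(f (y, x) \<in> B) = (f (x, y) \<in> i -` B \<inter> space M)" if "x \<in> ?S" "y \<in> ?S" for x y
        using antisym[OF that(2) that(1)] fsp[OF that] by simp
      show ?thesis by (auto simp: AB_def spQ key)
    qed
    finally show ?thesis .
  qed
  have invB: "i -` (i -` B \<inter> space M) \<inter> space M = B" if "B \<in> sets M" for B
    using sets.sets_into_space[OF that] i_inv measurable_space[OF i_meas] by auto
  have iB: "i -` B \<inter> space M \<in> sets M" if "B \<in> sets M" for B
    using measurable_sets[OF i_meas that] .
  have ABsub: "AB B \<subseteq> ?S \<times> ?S" for B by (auto simp: AB_def spQ)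
  have QAB: "measure ?Q (AB B) = measure ?Q (AB (i -` B \<inter> space M))" if "B \<in> sets M" for B
  proof -
    have "measure ?Q (AB B) = measure ?Q (AB B \<inter> (?S \<times> ?S))" using ABsub[of B] by (simp add: Int_absorb2)
    also have "\<dots> = measure ?Q ((?S \<times> ?S) \<inter> AB (i -` B \<inter> space M))" using swap[OF that] by simp
    also have "\<dots> = measure ?Q (AB (i -` B \<inter> space M))" using ABsub by (simp add: Int_absorb1)
    finally show ?thesis .
  qed
  have XF_FY: "XFall \<Longrightarrow> FYall"
  proof -
    assume H: XFall
    show FYall unfolding FYall_def
    proof (intro ballI)
      fix B D assume B: "B \<in> sets M" and D: "D \<in> sets \<mu>"
      let ?B' = "i -` B \<inter> space M"
      have "measure ?Q (AB B \<inter> (?S \<times> D)) = measure ?Q ((D \<times> ?S) \<inter> AB ?B')"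
        by (rule swap[OF B D])
      also have "\<dots> = measure \<mu> D * measure ?Q (AB ?B')" using H D iB[OF B] by (auto simp: XFall_def)
      also have "\<dots> = measure ?Q (AB B) * measure \<mu> D" using QAB[OF B] by simp
      finally show "measure ?Q (AB B \<inter> (?S \<times> D)) = measure ?Q (AB B) * measure \<mu> D" .
    qed
  qed
  have FY_XF: "FYall \<Longrightarrow> XFall"
  proof -
    assume H: FYall
    show XFall unfolding XFall_def
    proof (intro ballI)
      fix C B assume C: "C \<in> sets \<mu>" and B: "B \<in> sets M"
      let ?B' = "i -` B \<inter> space M"
      have "measure ?Q ((C \<times> ?S) \<inter> AB B) = measure ?Q (AB ?B' \<inter> (?S \<times> C))"
        using swap[OF iB[OF B] C] invB[OF B] by simp
      also have "\<dots> = measure ?Q (AB ?B') * measure \<mu> C" using H C iB[OF B] by (auto simp: FYall_def)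
      also have "\<dots> = measure \<mu> C * measure ?Q (AB B)" using QAB[OF B] by simp
      finally show "measure ?Q ((C \<times> ?S) \<inter> AB B) = measure \<mu> C * measure ?Q (AB B)" .
    qed
  qed
  have distrF: "distr P0 M (\<lambda>\<omega>. f (X0 \<omega>, Y0 \<omega>)) = distr (\<rho> \<Otimes>\<^sub>M \<sigma>) M f"
    if "prob_space P0" "distr P0 \<mu> X0 = \<rho>" "distr P0 \<mu> Y0 = \<sigma>" "indep_rv P0 \<mu> X0 \<mu> Y0"
    for P0 :: "'z measure" and X0 Y0 \<rho> \<sigma>
  proof -
    have "(\<lambda>\<omega>. (X0 \<omega>, Y0 \<omega>)) \<in> measurable P0 ?Q" using that(4) by (auto simp: indep_rv_def intro: measurable_Pair)
    then have "distr (distr P0 ?Q (\<lambda>\<omega>. (X0 \<omega>, Y0 \<omega>))) M f = distr P0 M (f \<circ> (\<lambda>\<omega>. (X0 \<omega>, Y0 \<omega>)))"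
      by (rule distr_distr[OF f_meas])
    then show ?thesis using joint_distr[OF that] by (simp add: comp_def)
  qed
  have hex: "distr (\<mu>0 \<Otimes>\<^sub>M \<nu>0) M f = distr (\<mu>1 \<Otimes>\<^sub>M \<nu>1) M f"
    if XF: XFall and FY: FYall and bd1: "balanced_decomposition \<mu> \<mu>0 \<mu>1" and bd2: "balanced_decomposition \<mu> \<nu>0 \<nu>1"
    for \<mu>0 \<mu>1 \<nu>0 \<nu>1
  proof -
    note p1 = balanced_parts[OF bd1] and p2 = balanced_parts[OF bd2]
    have s0: "sets (\<mu>0 \<Otimes>\<^sub>M \<nu>0) = sets ?Q" and s1: "sets (\<mu>1 \<Otimes>\<^sub>M \<nu>1) = sets ?Q"
      using p1 p2 by (simp_all cong: sets_pair_measure_cong)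
    have f0: "f \<in> measurable (\<mu>0 \<Otimes>\<^sub>M \<nu>0) M" using measurable_cong_sets[OF s0 refl] f_meas by blast
    have f1: "f \<in> measurable (\<mu>1 \<Otimes>\<^sub>M \<nu>1) M" using measurable_cong_sets[OF s1 refl] f_meas by blast
    have sp0: "space (\<mu>0 \<Otimes>\<^sub>M \<nu>0) = space ?Q" using sets_eq_imp_space_eq[OF s0] .
    have sp1: "space (\<mu>1 \<Otimes>\<^sub>M \<nu>1) = space ?Q" using sets_eq_imp_space_eq[OF s1] .
    show ?thesis
    proof (rule measure_eqI)
      show "sets (distr (\<mu>0 \<Otimes>\<^sub>M \<nu>0) M f) = sets (distr (\<mu>1 \<Otimes>\<^sub>M \<nu>1) M f)" by simp
      fix B assume "B \<in> sets (distr (\<mu>0 \<Otimes>\<^sub>M \<nu>0) M f)"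
      then have B: "B \<in> sets M" by simp
      have A: "AB B \<in> sets ?Q" using ABs[OF B] .
      have h_ae: "AE x in \<mu>. (\<integral>\<^sup>+y. indicator (AB B) (x, y) \<partial>\<mu>) = emeasure ?Q (AB B)"
        using ae_X[OF mu A] XF B unfolding XFall_def by blast
      have k_ae: "AE y in \<mu>. (\<integral>\<^sup>+x. indicator (AB B) (x, y) \<partial>\<mu>) = emeasure ?Q (AB B)"
        using ae_Y[OF mu A] FY B unfolding FYall_def by blast
      have fin: "emeasure ?Q (AB B) \<noteq> \<infinity>" using P.emeasure_finite by (simp add: infinity_ennreal_def)
      have "emeasure (\<mu>0 \<Otimes>\<^sub>M \<nu>0) (AB B) = emeasure (\<mu>1 \<Otimes>\<^sub>M \<nu>1) (AB B)"
        by (rule hex_core[OF mu A h_ae k_ae fin bd1 bd2])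
      then show "emeasure (distr (\<mu>0 \<Otimes>\<^sub>M \<nu>0) M f) B = emeasure (distr (\<mu>1 \<Otimes>\<^sub>M \<nu>1) M f) B"
        using B by (simp add: emeasure_distr f0 f1 sp0 sp1 AB_def)
    qed
  qed
  have part3: "(\<forall>\<mu>0 \<mu>1. balanced_decomposition \<mu> \<mu>0 \<mu>1 \<longrightarrow>
           (\<forall>(P0 :: 'd measure) X0 Y0 (P1 :: 'e measure) X1 Y1.
              prob_space P0 \<and> distr P0 \<mu> X0 = \<mu>0 \<and> distr P0 \<mu> Y0 = \<mu>0 \<and>
              indep_rv P0 \<mu> X0 \<mu> Y0 \<and>
              prob_space P1 \<and> distr P1 \<mu> X1 = \<mu>1 \<and> distr P1 \<mu> Y1 = \<mu>1 \<and>
              indep_rv P1 \<mu> X1 \<mu> Y1 \<longrightarrow>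
              distr P0 M (\<lambda>\<omega>. f (X0 \<omega>, Y0 \<omega>)) = distr P1 M (\<lambda>\<omega>. f (X1 \<omega>, Y1 \<omega>))))
      \<and> (\<forall>\<mu>0 \<mu>1 \<nu>0 \<nu>1. balanced_decomposition \<mu> \<mu>0 \<mu>1 \<longrightarrow> balanced_decomposition \<mu> \<nu>0 \<nu>1 \<longrightarrow>
           (\<forall>(P0 :: 'f measure) X0 Y0 (P1 :: 'g measure) X1 Y1.
              prob_space P0 \<and> distr P0 \<mu> X0 = \<mu>0 \<and> distr P0 \<mu> Y0 = \<nu>0 \<and>
              indep_rv P0 \<mu> X0 \<mu> Y0 \<and>
              prob_space P1 \<and> distr P1 \<mu> X1 = \<mu>1 \<and> distr P1 \<mu> Y1 = \<nu>1 \<and>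
              indep_rv P1 \<mu> X1 \<mu> Y1 \<longrightarrow>
              distr P0 M (\<lambda>\<omega>. f (X0 \<omega>, Y0 \<omega>)) = distr P1 M (\<lambda>\<omega>. f (X1 \<omega>, Y1 \<omega>))))"
    if XF: XFall and FY: FYall
  proof (intro conjI allI impI; elim conjE)
    fix \<mu>0 \<mu>1 and P0 :: "'d measure" and X0 Y0 and P1 :: "'e measure" and X1 Y1
    assume bd: "balanced_decomposition \<mu> \<mu>0 \<mu>1" and h: "prob_space P0" "distr P0 \<mu> X0 = \<mu>0" "distr P0 \<mu> Y0 = \<mu>0"
      "indep_rv P0 \<mu> X0 \<mu> Y0" "prob_space P1" "distr P1 \<mu> X1 = \<mu>1" "distr P1 \<mu> Y1 = \<mu>1" "indep_rv P1 \<mu> X1 \<mu> Y1"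
    show "distr P0 M (\<lambda>\<omega>. f (X0 \<omega>, Y0 \<omega>)) = distr P1 M (\<lambda>\<omega>. f (X1 \<omega>, Y1 \<omega>))"
      using distrF[OF h(1-4)] distrF[OF h(5-8)] hex[OF XF FY bd bd] by simp
  next
    fix \<mu>0 \<mu>1 \<nu>0 \<nu>1 and P0 :: "'f measure" and X0 Y0 and P1 :: "'g measure" and X1 Y1
    assume bd: "balanced_decomposition \<mu> \<mu>0 \<mu>1" and bd': "balanced_decomposition \<mu> \<nu>0 \<nu>1"
      and h: "prob_space P0" "distr P0 \<mu> X0 = \<mu>0" "distr P0 \<mu> Y0 = \<nu>0"
      "indep_rv P0 \<mu> X0 \<mu> Y0" "prob_space P1" "distr P1 \<mu> X1 = \<mu>1" "distr P1 \<mu> Y1 = \<nu>1" "indep_rv P1 \<mu> X1 \<mu> Y1"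
    show "distr P0 M (\<lambda>\<omega>. f (X0 \<omega>, Y0 \<omega>)) = distr P1 M (\<lambda>\<omega>. f (X1 \<omega>, Y1 \<omega>))"
      using distrF[OF h(1-4)] distrF[OF h(5-8)] hex[OF XF FY bd bd'] by simp
  qed
  show ?thesis
    using part3 XF_FY FY_XF tXF tFY XY by blast
qed


end
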